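(* There exists a locally compact groupoid $G$ over a base space $X$, with $G$ even compact, whose range map $r:G\to X$ is open, but such that $G$ admits no Haar system.
   Context: A groupoid over a set $X$ is a small category with object set $X$ in which every arrow is invertible; $G$ denotes its set of arrows, with range and source maps $r,s:G\to X$, identity map $\varepsilon:X\to G$, composition $m$ defined on the set $G^{(2)}=\{(\alpha,\beta)\in G\times G: s(\alpha)=r(\beta)\}$ of composable pairs, and inversion $\iota$. A topological groupoid is a groupoid with topologies on $G$ and $X$ making $r,s,\varepsilon,m,\iota$ continuous ($G^{(2)}$ carries the subspace topology of $G\times G$). A locally compact groupoid is a topological groupoid in which $G$ and $X$ are locally compact Hausdorff spaces. For $x\in X$ write $G^x=\{g\in G: r(g)=x\}$ and $G_y^x=\{g\in G: s(g)=y,\ r(g)=x\}$. A Haar system on a locally compact groupoid $G$ is a family $(\mu^x)_{x\in X}$ of Radon measures on $G$ such that (a) $\operatorname{supp}(\mu^x)=G^x$ for every $x\in X$; (b) $\int_G\phi(\alpha g)\,d\mu^{y}(g)=\int_G\phi(g)\,d\mu^{x}(g)$ for every $\phi\in C_c(G)$ and every $\alpha\in G_y^x$; (c) for every $\phi\in C_c(G)$ the map $x\mapsto\int_G\phi(g)\,d\mu^x(g)$ is continuous on $X$. *)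

theory Defs
  imports "HOL-Analysis.Analysis"
begin

definition groupoid ::
  "'g set \<Rightarrow> 'x set \<Rightarrow> ('g \<Rightarrow> 'x) \<Rightarrow> ('g \<Rightarrow> 'x) \<Rightarrow> ('x \<Rightarrow> 'g)
   \<Rightarrow> ('g \<Rightarrow> 'g \<Rightarrow> 'g) \<Rightarrow> ('g \<Rightarrow> 'g) \<Rightarrow> bool" where
  "groupoid G X r s e m iv \<longleftrightarrow>
     (\<forall>a\<in>G. r a \<in> X \<and> s a \<in> X) \<and>
     (\<forall>x\<in>X. e x \<in> G \<and> r (e x) = x \<and> s (e x) = x) \<and>
     (\<forall>a\<in>G. \<forall>b\<in>G. s a = r b \<longrightarrow> m a b \<in> G \<and> r (m a b) = r a \<and> s (m a b) = s b) \<and>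
     (\<forall>a\<in>G. \<forall>b\<in>G. \<forall>c\<in>G. s a = r b \<and> s b = r c \<longrightarrow> m (m a b) c = m a (m b c)) \<and>
     (\<forall>a\<in>G. m (e (r a)) a = a \<and> m a (e (s a)) = a) \<and>
     (\<forall>a\<in>G. iv a \<in> G \<and> r (iv a) = s a \<and> s (iv a) = r a \<and>
              m a (iv a) = e (r a) \<and> m (iv a) a = e (s a))"

definition composable_pairs :: "'g set \<Rightarrow> ('g \<Rightarrow> 'x) \<Rightarrow> ('g \<Rightarrow> 'x) \<Rightarrow> ('g \<times> 'g) set" where
  "composable_pairs G r s = {(a, b). a \<in> G \<and> b \<in> G \<and> s a = r b}"

definition topological_groupoid ::
  "'g topology \<Rightarrow> 'x topology \<Rightarrow> ('g \<Rightarrow> 'x) \<Rightarrow> ('g \<Rightarrow> 'x) \<Rightarrow> ('x \<Rightarrow> 'g)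
   \<Rightarrow> ('g \<Rightarrow> 'g \<Rightarrow> 'g) \<Rightarrow> ('g \<Rightarrow> 'g) \<Rightarrow> bool" where
  "topological_groupoid TG TX r s e m iv \<longleftrightarrow>
     groupoid (topspace TG) (topspace TX) r s e m iv \<and>
     continuous_map TG TX r \<and> continuous_map TG TX s \<and> continuous_map TX TG e \<and>
     continuous_map TG TG iv \<and>
     continuous_map (subtopology (prod_topology TG TG) (composable_pairs (topspace TG) r s)) TG
        (\<lambda>(a, b). m a b)"

definition locally_compact_groupoid ::
  "'g topology \<Rightarrow> 'x topology \<Rightarrow> ('g \<Rightarrow> 'x) \<Rightarrow> ('g \<Rightarrow> 'x) \<Rightarrow> ('x \<Rightarrow> 'g)
   \<Rightarrow> ('g \<Rightarrow> 'g \<Rightarrow> 'g) \<Rightarrow> ('g \<Rightarrow> 'g) \<Rightarrow> bool" where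
  "locally_compact_groupoid TG TX r s e m iv \<longleftrightarrow>
     topological_groupoid TG TX r s e m iv \<and>
     locally_compact_space TG \<and> Hausdorff_space TG \<and>
     locally_compact_space TX \<and> Hausdorff_space TX"

definition borel_sets_of :: "'a topology \<Rightarrow> 'a set set" where
  "borel_sets_of T = sigma_sets (topspace T) {U. openin T U}"

definition radon_measure :: "'a topology \<Rightarrow> 'a measure \<Rightarrow> bool" where
  "radon_measure T M \<longleftrightarrow>
     space M = topspace T \<and> sets M = borel_sets_of T \<and>
     (\<forall>x\<in>topspace T. \<exists>U. openin T U \<and> x \<in> U \<and> emeasure M U < \<infinity>) \<and>
     (\<forall>A\<in>sets M. emeasure M A = (INF U\<in>{U. openin T U \<and> A \<subseteq> U}. emeasure M U)) \<and>
     (\<forall>U. openin T U \<longrightarrow> emeasure M U = (SUP K\<in>{K. compactin T K \<and> K \<subseteq> U}. emeasure M K))"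

definition measure_support :: "'a topology \<Rightarrow> 'a measure \<Rightarrow> 'a set" where
  "measure_support T M = {x \<in> topspace T. \<forall>U. openin T U \<and> x \<in> U \<longrightarrow> emeasure M U > 0}"

definition Cc :: "'a topology \<Rightarrow> ('a \<Rightarrow> real) set" where
  "Cc T = {\<phi>. continuous_map T euclideanreal \<phi> \<and>
               compactin T (T closure_of {x \<in> topspace T. \<phi> x \<noteq> 0})}"

definition haar_system ::
  "'g topology \<Rightarrow> 'x topology \<Rightarrow> ('g \<Rightarrow> 'x) \<Rightarrow> ('g \<Rightarrow> 'x)
   \<Rightarrow> ('g \<Rightarrow> 'g \<Rightarrow> 'g) \<Rightarrow> ('x \<Rightarrow> 'g measure) \<Rightarrow> bool" where
  "haar_system TG TX r s m \<mu> \<longleftrightarrow>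
     (\<forall>x\<in>topspace TX. radon_measure TG (\<mu> x)) \<and>
     (\<forall>x\<in>topspace TX. measure_support TG (\<mu> x) = {g \<in> topspace TG. r g = x}) \<and>
     (\<forall>\<phi>\<in>Cc TG. \<forall>\<alpha>\<in>topspace TG.
        (\<integral>g. (if r g = s \<alpha> then \<phi> (m \<alpha> g) else 0) \<partial>(\<mu> (s \<alpha>))) = (\<integral>g. \<phi> g \<partial>(\<mu> (r \<alpha>)))) \<and>
     (\<forall>\<phi>\<in>Cc TG. continuous_map TX euclideanreal (\<lambda>x. \<integral>g. \<phi> g \<partial>(\<mu> x)))"

end

theory Submission
  imports Defs
begin

definition Yopen :: "real set \<Rightarrow> bool" where
  "Yopen U \<longleftrightarrow> (0 \<in> U \<longrightarrow> finite (- U))"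

lemma istop_Yopen: "istopology Yopen"
  unfolding istopology_def
proof (intro conjI allI impI)
  fix S T :: "real set" assume "Yopen S" "Yopen T"
  then show "Yopen (S \<inter> T)" by (auto simp: Yopen_def)
next
  fix K :: "real set set" assume K: "\<forall>S\<in>K. Yopen S"
  show "Yopen (\<Union>K)" unfolding Yopen_def
  proof
    assume "0 \<in> \<Union>K"
    then obtain S where "S \<in> K" "0 \<in> S" by auto
    with K have "finite (- S)" by (auto simp: Yopen_def)
    moreover have "- \<Union>K \<subseteq> - S" using \<open>S \<in> K\<close> by auto
    ultimately show "finite (- \<Union>K)" by (rule finite_subset[rotated])
  qed
qed

definition TY :: "real topology" where "TY = topology Yopen"

lemma openin_TY: "openin TY U \<longleftrightarrow> Yopen U"
  unfolding TY_def using istop_Yopen by (simp add: topology_inverse')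

lemma topspace_TY[simp]: "topspace TY = UNIV"
proof -
  have "openin TY UNIV" by (simp add: openin_TY Yopen_def)
  then show ?thesis using openin_subset by blast
qed

lemma TY_single: "x \<noteq> 0 \<Longrightarrow> openin TY {x}"
  by (simp add: openin_TY Yopen_def)

lemma TY_compl: "openin TY (- {x})"
  by (simp add: openin_TY Yopen_def)

lemma compact_TY: "compact_space TY"
  unfolding compact_space_def compactin_def
proof (intro conjI allI impI)
  fix \<U> assume H: "(\<forall>X\<in>\<U>. openin TY X) \<and> topspace TY \<subseteq> \<Union>\<U>"
  then obtain U0 where U0: "U0 \<in> \<U>" "0 \<in> U0" by auto
  with H have fin: "finite (- U0)" by (auto simp: openin_TY Yopen_def)
  define F where "F = insert U0 ((\<lambda>x. SOME U. U \<in> \<U> \<and> x \<in> U) ` (- U0))"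
  have "\<And>x. \<exists>U. U \<in> \<U> \<and> x \<in> U" using H by auto
  then have sm: "\<And>x. (SOME U. U \<in> \<U> \<and> x \<in> U) \<in> \<U> \<and> x \<in> (SOME U. U \<in> \<U> \<and> x \<in> U)"
    by (metis (mono_tags, lifting) someI_ex)
  have "finite F" using fin by (simp add: F_def)
  moreover have "F \<subseteq> \<U>" using U0 sm by (auto simp: F_def)
  moreover have "topspace TY \<subseteq> \<Union>F"
  proof
    fix x assume "x \<in> topspace TY"
    show "x \<in> \<Union>F"
    proof (cases "x \<in> U0")
      case True then show ?thesis by (auto simp: F_def)
    next
      case False then show ?thesis using sm[of x] unfolding F_def by blast
    qed
  qed
  ultimately show "\<exists>F. finite F \<and> F \<subseteq> \<U> \<and> topspace TY \<subseteq> \<Union>F" by blast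
qed simp

lemma Hausdorff_TY: "Hausdorff_space TY"
  unfolding Hausdorff_space_def
proof (intro allI impI)
  fix x y :: real assume "x \<in> topspace TY \<and> y \<in> topspace TY \<and> x \<noteq> y"
  then have xy: "x \<noteq> y" by auto
  show "\<exists>U V. openin TY U \<and> openin TY V \<and> x \<in> U \<and> y \<in> V \<and> disjnt U V"
  proof (cases "x = 0")
    case True
    then show ?thesis using xy TY_compl[of y] TY_single[of y]
      by (intro exI[of _ "- {y}"] exI[of _ "{y}"]) (auto simp: disjnt_def)
  next
    case False
    then show ?thesis using xy TY_compl[of x] TY_single[of x]
      by (intro exI[of _ "{x}"] exI[of _ "- {x}"]) (auto simp: disjnt_def)
  qed
qed

definition kk :: "real \<times> real \<Rightarrow> real" where "kk = (SOME f. bij f)"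

lemma bij_kk: "bij kk"
proof -
  have "\<exists>f. bij_betw f (UNIV :: (real \<times> real) set) (UNIV :: real set)"
  proof -
    have "infinite (UNIV::real set)" by (rule infinite_UNIV_char_0)
    from card_of_Times_same_infinite[OF this] show ?thesis
      by (subst card_of_ordIso) simp
  qed
  then show ?thesis unfolding kk_def by (metis someI_ex)
qed

definition hh :: "real \<Rightarrow> real \<times> real" where "hh = inv kk"

lemma hk[simp]: "hh (kk p) = p" using bij_kk unfolding hh_def by (simp add: bij_is_inj)
lemma kh[simp]: "kk (hh a) = a" using bij_kk unfolding hh_def by (simp add: bij_is_surj surj_f_inv_f)

definition PP :: "(real \<times> real) topology" where "PP = prod_topology TY TY"
definition TG :: "real topology" where "TG = pullback_topology UNIV hh PP"

lemma topspace_PP[simp]: "topspace PP = UNIV" by (simp add: PP_def)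
lemma topspace_TG[simp]: "topspace TG = UNIV" by (simp add: TG_def topspace_pullback_topology)

lemma cont_hh: "continuous_map TG PP hh"
  using continuous_map_pullback[of PP PP id UNIV hh] by (simp add: TG_def)

lemma cont_kk: "continuous_map PP TG kk"
  unfolding TG_def
  by (rule continuous_map_pullback') (simp_all add: comp_def)

lemma homeo: "homeomorphic_maps TG PP hh kk"
  unfolding homeomorphic_maps_def using cont_hh cont_kk by simp


lemma homeo_space: "TG homeomorphic_space PP"
  unfolding homeomorphic_space_def using homeo by blast

lemma compact_TG: "compact_space TG"
  using homeomorphic_compact_space[OF homeo_space] compact_TY
  by (simp add: PP_def compact_space_prod_topology)

lemma Hausdorff_TG: "Hausdorff_space TG"
  using homeomorphic_Hausdorff_space[OF homeo_space] Hausdorff_TY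
  by (simp add: PP_def Hausdorff_space_prod_topology)

lemma cont_r: "continuous_map TG TY (\<lambda>a. fst (hh a))"
  using continuous_map_compose[OF cont_hh continuous_map_fst[of TY TY, folded PP_def]]
  by (simp add: PP_def o_def)

lemma cont_s: "continuous_map TG TY (\<lambda>a. snd (hh a))"
  using continuous_map_compose[OF cont_hh continuous_map_snd[of TY TY, folded PP_def]]
  by (simp add: PP_def o_def)

lemma cont_e: "continuous_map TY TG (\<lambda>x. kk (x, x))"
proof -
  have "continuous_map TY PP (\<lambda>x. (x, x))"
    unfolding PP_def by (intro continuous_map_pairedI) (simp_all add: id_def[symmetric])
  from continuous_map_compose[OF this cont_kk] show ?thesis by (simp add: o_def)
qed

lemma cont_iv: "continuous_map TG TG (\<lambda>a. kk (snd (hh a), fst (hh a)))"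
proof -
  have "continuous_map TG PP (\<lambda>a. (snd (hh a), fst (hh a)))"
    unfolding PP_def by (intro continuous_map_pairedI cont_r cont_s)
  from continuous_map_compose[OF this cont_kk] show ?thesis by (simp add: o_def)
qed

lemma cont_m: "continuous_map (prod_topology TG TG) TG (\<lambda>(a, b). kk (fst (hh a), snd (hh b)))"
proof -
  have 1: "continuous_map (prod_topology TG TG) TY (\<lambda>p. fst (hh (fst p)))"
    using continuous_map_compose[OF continuous_map_fst[of TG TG] cont_r] by (simp add: o_def)
  have 2: "continuous_map (prod_topology TG TG) TY (\<lambda>p. snd (hh (snd p)))"
    using continuous_map_compose[OF continuous_map_snd[of TG TG] cont_s] by (simp add: o_def)
  have "continuous_map (prod_topology TG TG) PP (\<lambda>p. (fst (hh (fst p)), snd (hh (snd p))))"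
    unfolding PP_def by (intro continuous_map_pairedI 1 2)
  from continuous_map_compose[OF this cont_kk] show ?thesis by (simp add: o_def split_def)
qed

lemma open_r: "open_map TG TY (\<lambda>a. fst (hh a))"
proof -
  have "open_map TG PP hh"
    using homeo homeomorphic_imp_open_map homeomorphic_maps_map by blast
  from open_map_compose[OF this open_map_fst[of TY TY, folded PP_def]] show ?thesis
    by (simp add: o_def)
qed

lemma groupoid_gen:
  fixes h :: "real \<Rightarrow> real \<times> real" and k
  assumes hk: "\<And>p. h (k p) = p" and kh: "\<And>a. k (h a) = a"
  shows "groupoid UNIV UNIV (\<lambda>a. fst (h a)) (\<lambda>a. snd (h a)) (\<lambda>x. k (x, x))
   (\<lambda>a b. k (fst (h a), snd (h b))) (\<lambda>a. k (snd (h a), fst (h a)))"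
  unfolding groupoid_def by (simp add: hk kh)

lemma groupoid_ex: "groupoid UNIV UNIV (\<lambda>a. fst (hh a)) (\<lambda>a. snd (hh a)) (\<lambda>x. kk (x, x))
   (\<lambda>a b. kk (fst (hh a), snd (hh b))) (\<lambda>a. kk (snd (hh a), fst (hh a)))"
  by (rule groupoid_gen) simp_all

lemma single_open: "t \<noteq> 0 \<Longrightarrow> openin TG {kk (1, t)}"
proof -
  assume t: "t \<noteq> 0"
  have "openin PP ({1} \<times> {t})" unfolding PP_def openin_prod_Times_iff
    using TY_single[of 1] TY_single[OF t] by simp
  moreover have "{kk (1, t)} = hh -` ({1} \<times> {t}) \<inter> UNIV"
    by auto (metis kh)
  ultimately show ?thesis unfolding TG_def openin_pullback_topology by blast
qed

lemma no_haar: "\<not> haar_system TG TY (\<lambda>a. fst (hh a)) (\<lambda>a. snd (hh a)) m \<mu>"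
proof
  assume H: "haar_system TG TY (\<lambda>a. fst (hh a)) (\<lambda>a. snd (hh a)) m \<mu>"
  define M where "M = \<mu> 1"
  have rad: "radon_measure TG M" using H unfolding haar_system_def M_def by simp
  have supp: "measure_support TG M = {g. fst (hh g) = 1}"
    using H unfolding haar_system_def M_def by simp
  have spM: "space M = UNIV" and sM: "sets M = borel_sets_of TG"
    using rad unfolding radon_measure_def by auto
  have opsets: "A \<in> sets M" if oA: "openin TG A" for A
  proof -
    have "A \<in> {U. openin TG U}" using oA by (simp only: mem_Collect_eq)
    then have "A \<in> sigma_sets (topspace TG) {U. openin TG U}" by (rule sigma_sets.Basic)
    then show ?thesis by (simp only: sM borel_sets_of_def)
  qed
  obtain U where U: "openin TG U" "kk (1, 0) \<in> U" "emeasure M U < \<infinity>"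
  proof -
    have "\<forall>x\<in>topspace TG. \<exists>U. openin TG U \<and> x \<in> U \<and> emeasure M U < \<infinity>"
      using rad unfolding radon_measure_def by (elim conjE)
    then have "\<exists>U. openin TG U \<and> kk (1, 0) \<in> U \<and> emeasure M U < \<infinity>"
      by (simp only: topspace_TG UNIV_I ball_UNIV)
    then show ?thesis using that by blast
  qed
  then obtain V where V: "openin PP V" "U = hh -` V \<inter> UNIV"
    unfolding TG_def openin_pullback_topology by blast
  have "hh (kk (1, 0)) \<in> V" using U(2) V(2) by blast
  then have "(1, 0) \<in> V" by (simp only: hk)
  have V1: "openin (prod_topology TY TY) V" using V(1) by (simp only: PP_def)
  have all: "\<forall>x y. (x, y) \<in> V \<longrightarrow> (\<exists>U V'. openin TY U \<and> openin TY V' \<and> x \<in> U \<and> y \<in> V' \<and> U \<times> V' \<subseteq> V)"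
    using V1 by (simp only: openin_prod_topology_alt)
  have "(1::real, 0::real) \<in> V \<longrightarrow> (\<exists>U V'. openin TY U \<and> openin TY V' \<and> 1 \<in> U \<and> 0 \<in> V' \<and> U \<times> V' \<subseteq> V)"
    using spec[OF spec[OF all, of "1::real"], of "0::real"] .
  then obtain W1 W2 where W: "openin TY W1" "openin TY W2" "1 \<in> W1" "0 \<in> W2" "W1 \<times> W2 \<subseteq> V"
    using \<open>(1, 0) \<in> V\<close> by blast
  have finW: "finite (- W2)" using W(2,4) by (simp add: openin_TY Yopen_def)
  define B where "B = W2 - {0}"
  have inU: "t \<in> B \<Longrightarrow> kk (1, t) \<in> U" for t
  proof -
    assume "t \<in> B"
    then have "(1, t) \<in> V" using W unfolding B_def by blast
    then have "hh (kk (1, t)) \<in> V" by (simp only: hk)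
    then show ?thesis using V(2) by blast
  qed
  define N where "N = restrict_space M U"
  have UM: "U \<inter> space M \<in> sets M" using opsets[OF U(1)] by (simp add: spM)
  have fm: "emeasure M U \<noteq> \<infinity>" using U(3) by (simp add: less_top)
  have eqN: "emeasure N (space N) = emeasure M U"
    unfolding N_def by (simp add: space_restrict_space emeasure_restrict_space[OF UM] spM)
  have "finite_measure N"
    by (rule finite_measureI) (subst eqN, rule fm)
  have pos: "t \<in> B \<Longrightarrow> measure N {kk (1, t)} \<noteq> 0" for t
  proof -
    assume t: "t \<in> B"
    have "kk (1, t) \<in> measure_support TG M" using supp by simp
    then have p: "emeasure M {kk (1, t)} > 0" using single_open[of t] t
      unfolding measure_support_def B_def by auto
    have le: "emeasure M {kk (1, t)} \<le> emeasure M U"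
      using inU[OF t] opsets[OF U(1)] by (intro emeasure_mono) auto
    have "measure N {kk (1, t)} = measure M {kk (1, t)}"
      unfolding N_def using UM inU[OF t] by (intro measure_restrict_space) auto
    moreover have "emeasure M {kk (1, t)} \<noteq> \<infinity>" using le U(3) by auto
    ultimately show ?thesis using p
      by (simp add: measure_def enn2real_eq_0_iff)
  qed
  have "(\<lambda>t. kk (1, t)) ` B \<subseteq> {x. measure N {x} \<noteq> 0}" using pos by auto
  then have "countable ((\<lambda>t. kk (1, t)) ` B)"
    using finite_measure.countable_support[OF \<open>finite_measure N\<close>] countable_subset by blast
  moreover have "inj_on (\<lambda>t. kk (1, t)) B"
    by (rule inj_onI) (metis hk prod.inject)
  ultimately have "countable B" using countable_image_inj_on by blast
  moreover have "countable (insert 0 (- W2))" using finW by (simp add: countable_finite)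
  ultimately have "countable (B \<union> insert 0 (- W2))" by simp
  moreover have "B \<union> insert 0 (- W2) = UNIV" by (auto simp: B_def)
  ultimately have "countable (UNIV::real set)" by metis
  then show False using uncountable_UNIV_real by blast
qed

theorem proposition2p2:
  shows "\<exists>(TG :: real topology) (TX :: real topology) r s e m iv.
           locally_compact_groupoid TG TX r s e m iv \<and>
           compact_space TG \<and>
           open_map TG TX r \<and>
           \<not> (\<exists>\<mu>. haar_system TG TX r s m \<mu>)"
proof (intro exI conjI)
  show "locally_compact_groupoid TG TY (\<lambda>a. fst (hh a)) (\<lambda>a. snd (hh a)) (\<lambda>x. kk (x, x))
   (\<lambda>a b. kk (fst (hh a), snd (hh b))) (\<lambda>a. kk (snd (hh a), fst (hh a)))"
    unfolding locally_compact_groupoid_def topological_groupoid_def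
    using groupoid_ex cont_r cont_s cont_e cont_iv
      continuous_map_from_subtopology[OF cont_m] compact_TG Hausdorff_TG compact_TY Hausdorff_TY
    by (simp add: compact_imp_locally_compact_space)
  show "compact_space TG" by (rule compact_TG)
  show "open_map TG TY (\<lambda>a. fst (hh a))" by (rule open_r)
  show "\<not> (\<exists>\<mu>. haar_system TG TY (\<lambda>a. fst (hh a)) (\<lambda>a. snd (hh a)) (\<lambda>a b. kk (fst (hh a), snd (hh b))) \<mu>)"
    using no_haar by blast
qed

end
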